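(* Let $P_1,P_2$ be probability measures on $(\Omega,\mathcal A)$ and $\delta\in(\tfrac12,1)$. If $\bar T(P_1,\delta)=\bar T(P_2,\delta)$, then $P_1=P_2$.
   Context: Let $(\Omega,\mathcal A)$ be a measurable space. For $n\ge1$, $\mathcal A^n$ is the product $\sigma$-algebra on $\Omega^n$; the extended event space is $\bar{\mathcal A}=\bigcup_{n\ge1}\mathcal A^n$, events tagged by their level $n$. For a probability measure $P$ on $\mathcal A$, $P^n$ is its $n$-fold product, $\bar P(A^{(n)})=P^n(A^{(n)})$ for $A^{(n)}\in\mathcal A^n$, and $\bar T(P,\delta)=\{A\in\bar{\mathcal A}:\bar P(A)\ge\delta\}$. *)

theory Defs
  imports "HOL-Probability.Probability"
begin

text \<open>Extended event space: events of level n \<ge> 1, tagged by their level,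
  living in the product sigma-algebra on Omega^n (modelled as functions on {..<n}).\<close>
definition ext_events :: "'a measure \<Rightarrow> (nat \<times> (nat \<Rightarrow> 'a) set) set" where
  "ext_events M = {(n, A). n \<ge> 1 \<and> A \<in> sets (PiM {..<n} (\<lambda>_. M))}"

definition ext_prob :: "'a measure \<Rightarrow> nat \<times> (nat \<Rightarrow> 'a) set \<Rightarrow> real" where
  "ext_prob P E = measure (PiM {..<fst E} (\<lambda>_. P)) (snd E)"

definition T_bar :: "'a measure \<Rightarrow> 'a measure \<Rightarrow> real \<Rightarrow> (nat \<times> (nat \<Rightarrow> 'a) set) set" where
  "T_bar M P \<delta> = {E \<in> ext_events M. ext_prob P E \<ge> \<delta>}"

end

theory Submission imports Defs begin

lemma coord_indep:
  assumes P: "prob_space P" and I: "finite I" "I \<noteq> {}"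
  shows "prob_space.indep_vars (PiM I (\<lambda>_. P)) (\<lambda>_. P) (\<lambda>i x. x i) I"
proof -
  interpret PP: prob_space "PiM I (\<lambda>_. P)" by (intro prob_space_PiM P)
  have "distr (PiM I (\<lambda>_. P)) (\<Pi>\<^sub>M i\<in>I. P) (\<lambda>x. \<lambda>i\<in>I. x i) = distr (PiM I (\<lambda>_. P)) (PiM I (\<lambda>_. P)) (\<lambda>x. x)"
    by (intro distr_cong) (auto simp: space_PiM PiE_def extensional_restrict)
  also have "\<dots> = (\<Pi>\<^sub>M i\<in>I. distr (PiM I (\<lambda>_. P)) P (\<lambda>x. x i))"
    by (simp, intro PiM_cong) (auto simp: distr_PiM_component[OF P] P)
  finally show ?thesis
    by (subst PP.indep_vars_iff_distr_eq_PiM') (use I in auto)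
qed

lemma hoeff:
  fixes n :: nat
  assumes P: "prob_space P" and A: "A \<in> sets P" and n: "n > 0" and e: "\<epsilon> \<ge> 0"
  shows "measure (PiM {..<n} (\<lambda>_. P)) {x\<in>space (PiM {..<n} (\<lambda>_. P)). (\<Sum>i<n. indicator A (x i)::real) \<le> real n * measure P A - \<epsilon>} \<le> exp(-2*\<epsilon>\<^sup>2/real n)"
    and "measure (PiM {..<n} (\<lambda>_. P)) {x\<in>space (PiM {..<n} (\<lambda>_. P)). (\<Sum>i<n. indicator A (x i)::real) \<ge> real n * measure P A + \<epsilon>} \<le> exp(-2*\<epsilon>\<^sup>2/real n)"
proof -
  interpret PP: prob_space "PiM {..<n} (\<lambda>_. P)" by (intro prob_space_PiM P)
  have ind: "PP.indep_vars (\<lambda>_. borel) (\<lambda>i x. indicator A (x i)::real) {..<n}"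
    using PP.indep_vars_compose2[OF coord_indep[OF P, of "{..<n}"], of "\<lambda>_. (indicator A :: _ \<Rightarrow> real)" "\<lambda>_. borel"] n A
    by (auto simp: lessThan_empty_iff)
  have ex: "PP.expectation (\<lambda>x. indicator A (x i)::real) = measure P A" if "i < n" for i
  proof -
    have "PP.expectation (\<lambda>x. indicator A (x i)::real) = integral\<^sup>L (distr (PiM {..<n} (\<lambda>_. P)) P (\<lambda>x. x i)) (indicator A)"
      using that A by (subst integral_distr) auto
    also have "\<dots> = integral\<^sup>L P (indicator A)"
      using that by (subst distr_PiM_component) (auto simp: P)
    finally show ?thesis using A by simp
  qed
  interpret H: Hoeffding_ineq "PiM {..<n} (\<lambda>_. P)" "{..<n}" "\<lambda>i x. indicator A (x i)::real" "\<lambda>_. 0" "\<lambda>_. 1" "\<Sum>i<n. PP.expectation (\<lambda>x. indicator A (x i)::real)"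
    by unfold_locales (use ind in \<open>auto simp: indicator_def\<close>)
  have mu: "(\<Sum>i<n. PP.expectation (\<lambda>x. indicator A (x i)::real)) = real n * measure P A"
    using ex by simp
  show "measure (PiM {..<n} (\<lambda>_. P)) {x\<in>space (PiM {..<n} (\<lambda>_. P)). (\<Sum>i<n. indicator A (x i)::real) \<le> real n * measure P A - \<epsilon>} \<le> exp(-2*\<epsilon>\<^sup>2/real n)"
    using H.Hoeffding_ineq_le[OF e] n by (simp add: mu)
  show "measure (PiM {..<n} (\<lambda>_. P)) {x\<in>space (PiM {..<n} (\<lambda>_. P)). (\<Sum>i<n. indicator A (x i)::real) \<ge> real n * measure P A + \<epsilon>} \<le> exp(-2*\<epsilon>\<^sup>2/real n)"
    using H.Hoeffding_ineq_ge[OF e] n by (simp add: mu)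
qed

lemma key:
  fixes M P1 P2 :: "'a measure" and \<delta> :: real
  assumes P1: "prob_space P1" and P2: "prob_space P2"
    and s1: "sets P1 = sets M" and s2: "sets P2 = sets M"
    and d: "0 < \<delta>" "\<delta> < 1"
    and A: "A \<in> sets M" and lt: "measure P2 A < measure P1 A"
  shows "\<exists>E. E \<in> T_bar M P1 \<delta> \<and> E \<notin> T_bar M P2 \<delta>"
proof -
  define p where "p = measure P1 A"
  define q where "q = measure P2 A"
  define t where "t = (p - q) / 2"
  define m where "m = min \<delta> (1 - \<delta>)"
  have t: "t > 0" using lt by (simp add: t_def p_def q_def)
  have m: "m > 0" "m \<le> \<delta>" "m \<le> 1 - \<delta>" using d by (auto simp: m_def)
  define n where "n = nat \<lceil>- ln m / (2 * t\<^sup>2)\<rceil> + 1"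
  have n: "n > 0" by (simp add: n_def)
  have "real n > - ln m / (2 * t\<^sup>2)" unfolding n_def by linarith
  hence "2 * t\<^sup>2 * real n > - ln m" using t by (simp add: field_simps)
  hence "-2 * t\<^sup>2 * real n < ln m" by simp
  hence "exp (-2 * t\<^sup>2 * real n) < exp (ln m)" by simp
  hence ex: "exp (-2 * (real n * t)\<^sup>2 / real n) < m" using m n
    by (simp add: power2_eq_square field_simps)
  have sp1: "space P1 = space M" using s1 by (rule sets_eq_imp_space_eq)
  have sp2: "space P2 = space M" using s2 by (rule sets_eq_imp_space_eq)
  have SP1: "space (PiM {..<n} (\<lambda>_. P1)) = space (PiM {..<n} (\<lambda>_. M))" by (simp add: space_PiM sp1)
  have SP2: "space (PiM {..<n} (\<lambda>_. P2)) = space (PiM {..<n} (\<lambda>_. M))" by (simp add: space_PiM sp2)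
  have SS1: "sets (PiM {..<n} (\<lambda>_. P1)) = sets (PiM {..<n} (\<lambda>_. M))" by (intro sets_PiM_cong) (auto simp: s1)
  have SS2: "sets (PiM {..<n} (\<lambda>_. P2)) = sets (PiM {..<n} (\<lambda>_. M))" by (intro sets_PiM_cong) (auto simp: s2)
  define S where "S = (\<lambda>x::nat \<Rightarrow> 'a. (\<Sum>i<n. indicator A (x i)::real))"
  define E where "E = {x\<in>space (PiM {..<n} (\<lambda>_. M)). S x \<ge> real n * ((p + q) / 2)}"
  have Smeas: "S \<in> borel_measurable (PiM {..<n} (\<lambda>_. M))"
    unfolding S_def using A by measurable
  have Esets: "E \<in> sets (PiM {..<n} (\<lambda>_. M))"
    unfolding E_def using Smeas by measurable
  have Eev: "(n, E) \<in> ext_events M" using n Esets by (simp add: ext_events_def)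
  interpret Q1: prob_space "PiM {..<n} (\<lambda>_. P1)" by (intro prob_space_PiM P1)
  interpret Q2: prob_space "PiM {..<n} (\<lambda>_. P2)" by (intro prob_space_PiM P2)
  have A1: "A \<in> sets P1" "A \<in> sets P2" using A s1 s2 by auto
  have "E = {x\<in>space (PiM {..<n} (\<lambda>_. P2)). S x \<ge> real n * q + real n * t}"
    unfolding E_def SP2 by (simp add: t_def field_simps)
  hence "measure (PiM {..<n} (\<lambda>_. P2)) E \<le> exp (-2 * (real n * t)\<^sup>2 / real n)"
    using hoeff(2)[OF P2 A1(2) n, of "real n * t"] t by (simp add: S_def q_def)
  hence E2: "ext_prob P2 (n, E) < \<delta>" using ex m by (simp add: ext_prob_def)
  have "space (PiM {..<n} (\<lambda>_. P1)) - E \<subseteq> {x\<in>space (PiM {..<n} (\<lambda>_. P1)). S x \<le> real n * p - real n * t}"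
    unfolding E_def SP1 by (auto simp: t_def field_simps)
  moreover have "{x\<in>space (PiM {..<n} (\<lambda>_. P1)). S x \<le> real n * p - real n * t} \<in> sets (PiM {..<n} (\<lambda>_. P1))"
    unfolding SS1 SP1 using Smeas by measurable
  ultimately have "measure (PiM {..<n} (\<lambda>_. P1)) (space (PiM {..<n} (\<lambda>_. P1)) - E) \<le> measure (PiM {..<n} (\<lambda>_. P1)) {x\<in>space (PiM {..<n} (\<lambda>_. P1)). S x \<le> real n * p - real n * t}"
    by (intro Q1.finite_measure_mono)
  also have "\<dots> \<le> exp (-2 * (real n * t)\<^sup>2 / real n)"
    using hoeff(1)[OF P1 A1(1) n, of "real n * t"] t by (simp add: S_def p_def)
  finally have "measure (PiM {..<n} (\<lambda>_. P1)) (space (PiM {..<n} (\<lambda>_. P1)) - E) < m" using ex by linarith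
  moreover have "measure (PiM {..<n} (\<lambda>_. P1)) (space (PiM {..<n} (\<lambda>_. P1)) - E) = 1 - measure (PiM {..<n} (\<lambda>_. P1)) E"
    using Esets SS1 by (intro Q1.prob_compl) auto
  ultimately have E1: "ext_prob P1 (n, E) \<ge> \<delta>" using m by (simp add: ext_prob_def)
  show ?thesis using Eev E1 E2 by (intro exI[of _ "(n, E)"]) (auto simp: T_bar_def)
qed

theorem mainTheorem8:
  fixes M P1 P2 :: "'a measure" and \<delta> :: real
  assumes "prob_space P1" and "prob_space P2"
    and "sets P1 = sets M" and "sets P2 = sets M"
    and "1/2 < \<delta>" and "\<delta> < 1"
    and "T_bar M P1 \<delta> = T_bar M P2 \<delta>"
  shows "P1 = P2"
proof (rule measure_eqI)
  show "sets P1 = sets P2" using assms by simp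
  fix A assume "A \<in> sets P1"
  hence A: "A \<in> sets M" using assms by simp
  have d: "0 < \<delta>" using assms by simp
  have "measure P1 A = measure P2 A"
  proof (rule ccontr)
    assume "measure P1 A \<noteq> measure P2 A"
    hence "measure P2 A < measure P1 A \<or> measure P1 A < measure P2 A" by linarith
    thus False
    proof
      assume "measure P2 A < measure P1 A"
      from key[OF assms(1-4) d assms(6) A this] assms(7) show False by blast
    next
      assume "measure P1 A < measure P2 A"
      from key[OF assms(2,1,4,3) d assms(6) A this] assms(7) show False by blast
    qed
  qed
  thus "emeasure P1 A = emeasure P2 A"
    using assms(1,2) by (simp add: finite_measure.emeasure_eq_measure prob_space_def)
qed

end
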